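(* Let $q\in\,]0,1[$, $\omega\ge 0$, let $I$ be an interval containing $\omega_0:=\omega/(1-q)$, and let $f:I\to\mathbb{R}$ be continuous at $\omega_0$. For $x\in I$ define $F(x):=\int_{\omega_0}^{x}f(t)\,\tilde d_{q,\omega}t$. Then $F$ is continuous at $\omega_0$, and $\tilde D_{q,\omega}[F](x)$ exists for every $x\in I^{q,\omega}$ with $\tilde D_{q,\omega}[F](x)=f(x)$. Conversely, $$\int_a^b\tilde D_{q,\omega}[f](t)\,\tilde d_{q,\omega}t=f(b)-f(a)$$ for all $a,b\in I$.
   Context: $\sigma(t):=qt+\omega$, $\sigma^{-1}(t):=q^{-1}(t-\omega)$, $\sigma^k$ is the $k$-fold composition of $\sigma$, $f^{\sigma^k}:=f\circ\sigma^k$, and $I^{q,\omega}:=\{qt+\omega:t\in I\}$. Hahn symmetric derivative: for $t\in I^{q,\omega}\setminus\{\omega_0\}$, $\tilde D_{q,\omega}[f](t):=\frac{f(\sigma(t))-f(\sigma^{-1}(t))}{\sigma(t)-\sigma^{-1}(t)}$, and $\tilde D_{q,\omega}[f](\omega_0):=f'(\omega_0)$ (classical derivative) provided $f$ is differentiable at $\omega_0$. Hahn symmetric integral: for $x\in I$, $$\int_{\omega_0}^x f(t)\,\tilde d_{q,\omega}t:=\bigl(\sigma^{-1}(x)-\sigma(x)\bigr)\sum_{n=0}^{\infty}q^{2n+1}f(\sigma^{2n+1}(x)),$$ and for $a,b\in I$, $\int_a^b f(t)\,\tilde d_{q,\omega}t:=\int_{\omega_0}^b f(t)\,\tilde d_{q,\omega}t-\int_{\omega_0}^a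 f(t)\,\tilde d_{q,\omega}t$, provided the series converge at $x=a$ and $x=b$. *)

theory Defs
  imports "HOL-Analysis.Analysis"
begin

definition hsigma :: "real \<Rightarrow> real \<Rightarrow> real \<Rightarrow> real" where
  "hsigma q \<omega> t = q * t + \<omega>"

definition hsigma_inv :: "real \<Rightarrow> real \<Rightarrow> real \<Rightarrow> real" where
  "hsigma_inv q \<omega> t = (t - \<omega>) / q"

definition homega0 :: "real \<Rightarrow> real \<Rightarrow> real" where
  "homega0 q \<omega> = \<omega> / (1 - q)"

definition hahn_image :: "real \<Rightarrow> real \<Rightarrow> real set \<Rightarrow> real set" where
  "hahn_image q \<omega> I = (\<lambda>t. q * t + \<omega>) ` I"

definition hahn_series :: "real \<Rightarrow> real \<Rightarrow> (real \<Rightarrow> real) \<Rightarrow> real \<Rightarrow> nat \<Rightarrow> real" where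
  "hahn_series q \<omega> f x n = q ^ (2 * n + 1) * f ((hsigma q \<omega> ^^ (2 * n + 1)) x)"

text \<open>Hahn symmetric integral from omega0 to x (meaningful when the series converges).\<close>
definition hahn_int0 :: "real \<Rightarrow> real \<Rightarrow> (real \<Rightarrow> real) \<Rightarrow> real \<Rightarrow> real" where
  "hahn_int0 q \<omega> f x = (hsigma_inv q \<omega> x - hsigma q \<omega> x) * (\<Sum>n. hahn_series q \<omega> f x n)"

definition hahn_int :: "real \<Rightarrow> real \<Rightarrow> (real \<Rightarrow> real) \<Rightarrow> real \<Rightarrow> real \<Rightarrow> real" where
  "hahn_int q \<omega> f a b = hahn_int0 q \<omega> f b - hahn_int0 q \<omega> f a"

definition hahn_sderiv_at :: "real \<Rightarrow> real \<Rightarrow> real set \<Rightarrow> (real \<Rightarrow> real) \<Rightarrow> real \<Rightarrow> real \<Rightarrow> bool" where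
  "hahn_sderiv_at q \<omega> I F x d \<longleftrightarrow>
     (if x = homega0 q \<omega> then (F has_real_derivative d) (at x within I)
      else d = (F (hsigma q \<omega> x) - F (hsigma_inv q \<omega> x)) / (hsigma q \<omega> x - hsigma_inv q \<omega> x))"

definition hahn_sderiv :: "real \<Rightarrow> real \<Rightarrow> (real \<Rightarrow> real) \<Rightarrow> real \<Rightarrow> real" where
  "hahn_sderiv q \<omega> f t =
     (if t = homega0 q \<omega> then deriv f t
      else (f (hsigma q \<omega> t) - f (hsigma_inv q \<omega> t)) / (hsigma q \<omega> t - hsigma_inv q \<omega> t))"

end

theory Submission imports Defs begin

lemma c_fix: "q \<noteq> 1 \<Longrightarrow> q * homega0 q \<omega> + \<omega> = homega0 q \<omega>"
proof -
  assume "q \<noteq> 1"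
  then have "1 - q \<noteq> 0" by simp
  then show ?thesis by (simp add: homega0_def field_simps)
qed

lemma iter_eq:
  assumes "q \<noteq> 1"
  shows "(hsigma q \<omega> ^^ k) x = homega0 q \<omega> + q^k * (x - homega0 q \<omega>)"
proof (induction k)
  case 0 then show ?case by simp
next
  case (Suc k)
  have "(hsigma q \<omega> ^^ Suc k) x = hsigma q \<omega> ((hsigma q \<omega> ^^ k) x)" by simp
  also have "\<dots> = q * (homega0 q \<omega> + q^k * (x - homega0 q \<omega>)) + \<omega>"
    by (simp only: Suc.IH hsigma_def)
  also have "\<dots> = (q * homega0 q \<omega> + \<omega>) + q^Suc k * (x - homega0 q \<omega>)"
    by (simp add: algebra_simps)
  finally show ?case using c_fix[OF assms] by simp
qed

lemma sig_eq: "q \<noteq> 1 \<Longrightarrow> hsigma q \<omega> x = homega0 q \<omega> + q * (x - homega0 q \<omega>)"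
  using iter_eq[where k=1 and q=q and \<omega>=\<omega> and x=x] by simp

lemma siginv_eq: "q \<noteq> 1 \<Longrightarrow> q \<noteq> 0 \<Longrightarrow> hsigma_inv q \<omega> x = homega0 q \<omega> + (x - homega0 q \<omega>) / q"
proof -
  assume a: "q \<noteq> 1" "q \<noteq> 0"
  have "\<omega> = homega0 q \<omega> - q * homega0 q \<omega>" using c_fix[OF a(1), of \<omega>] by simp
  then show ?thesis using a(2) by (simp add: hsigma_inv_def field_simps)
qed

lemma series_eq: "q \<noteq> 1 \<Longrightarrow> hahn_series q \<omega> f x n =
   q^(2*n+1) * f (homega0 q \<omega> + q^(2*n+1) * (x - homega0 q \<omega>))"
  unfolding hahn_series_def by (subst iter_eq) auto

lemma mem_I:
  fixes c x r :: real
  assumes "is_interval I" "c \<in> I" "x \<in> I" "0 \<le> r" "r \<le> 1"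
  shows "c + r * (x - c) \<in> I"
proof (cases "x \<le> c")
  case True
  have "r * (c - x) \<le> c - x" using True assms(4,5) mult_left_le_one_le[of "c - x" r] by auto
  moreover have "0 \<le> r * (c - x)" using True assms(4) by simp
  ultimately have "x \<le> c + r * (x - c)" "c + r * (x - c) \<le> c" by (auto simp: algebra_simps)

  then show ?thesis using assms(1-3) unfolding is_interval_1 by blast
next
  case False
  have "r * (x - c) \<le> x - c" using False assms(4,5) mult_left_le_one_le[of "x - c" r] by auto
  moreover have "0 \<le> r * (x - c)" using False assms(4) by simp
  ultimately have "c \<le> c + r * (x - c)" "c + r * (x - c) \<le> x" by (auto simp: algebra_simps)
  then show ?thesis using assms(1-3) unfolding is_interval_1 by blast
qed

lemma geo_sums:
  fixes q :: real
  assumes "0 < q" "q < 1"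
  shows "(\<lambda>n. q^(2*n+1)) sums (q / (1 - q^2))"
proof -
  have "norm (q^2) < 1" using assms by (simp add: power_less_one_iff abs_square_less_1)
  then have "(\<lambda>n. (q^2)^n) sums (1 / (1 - q^2))" by (rule geometric_sums)
  then have "(\<lambda>n. q * (q^2)^n) sums (q * (1 / (1 - q^2)))" by (rule sums_mult)
  then show ?thesis by (simp add: power_mult[symmetric] mult.commute)
qed

lemma diff_eq: "q \<noteq> 1 \<Longrightarrow> q \<noteq> 0 \<Longrightarrow>
  hsigma_inv q \<omega> y - hsigma q \<omega> y = (1/q - q) * (y - homega0 q \<omega>)"
  by (simp add: sig_eq siginv_eq algebra_simps diff_divide_distrib)

lemma seq_lim:
  fixes q c x :: real
  assumes "0 < q" "q < 1"
  shows "(\<lambda>n. c + q^(2*n+j)*(x-c)) \<longlonglongrightarrow> c"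
proof -
  have "norm (q^2) < 1" using assms by (simp add: power_less_one_iff abs_square_less_1)
  then have "(\<lambda>n. (q^2)^n) \<longlonglongrightarrow> 0" by (rule LIMSEQ_power_zero)
  then have "(\<lambda>n. c + (q^j*(x-c)) * (q^2)^n) \<longlonglongrightarrow> c + (q^j*(x-c)) * 0"
    by (rule tendsto_add[OF tendsto_const tendsto_mult[OF tendsto_const]])
  moreover have "\<And>n. (q^j*(x-c)) * (q^2)^n = q^(2*n+j)*(x-c)"
    by (simp add: power_add power_mult[symmetric] mult.commute mult.left_commute)
  ultimately show ?thesis by simp
qed

lemma f_lim:
  fixes q x :: real
  assumes "0 < q" "q < 1" "is_interval I" "homega0 q \<omega> \<in> I" "x \<in> I"
    and cont: "continuous (at (homega0 q \<omega>) within I) f"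
  shows "(\<lambda>n. f (homega0 q \<omega> + q^(2*n+j)*(x - homega0 q \<omega>))) \<longlonglongrightarrow> f (homega0 q \<omega>)"
proof -
  let ?c = "homega0 q \<omega>"
  let ?s = "\<lambda>n. ?c + q^(2*n+j)*(x - ?c)"
  have "\<forall>n. ?s n \<in> I" using assms
    by (auto intro!: mem_I power_le_one)
  moreover have "?s \<longlonglongrightarrow> ?c" using seq_lim assms by blast
  moreover have H: "\<forall>x. (\<forall>n. x n \<in> I) \<and> x \<longlonglongrightarrow> ?c \<longrightarrow> (f \<circ> x) \<longlonglongrightarrow> f ?c"
    using cont unfolding continuous_within_sequentially .
  ultimately have "(f \<circ> ?s) \<longlonglongrightarrow> f ?c"
    by (intro H[rule_format]) auto
  then show ?thesis by (simp add: o_def)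
qed

lemma summ:
  fixes q x :: real
  assumes "0 < q" "q < 1" "is_interval I" "homega0 q \<omega> \<in> I" "x \<in> I"
    and cont: "continuous (at (homega0 q \<omega>) within I) f"
  shows "summable (hahn_series q \<omega> f x)"
proof -
  let ?c = "homega0 q \<omega>"
  have "convergent (\<lambda>n. f (?c + q^(2*n+1)*(x - ?c)))"
    using f_lim[OF assms] convergent_def by blast
  then have "Bseq (\<lambda>n. f (?c + q^(2*n+1)*(x - ?c)))" by (rule convergent_imp_Bseq)
  then obtain B where B: "\<And>n. norm (f (?c + q^(2*n+1)*(x - ?c))) \<le> B"
    by (metis BseqE)
  have "summable (\<lambda>n. B * q^(2*n+1))"
    using geo_sums[OF assms(1,2)] by (intro summable_mult) (auto simp: sums_iff)
  then show ?thesis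
  proof (rule summable_comparison_test')
    fix n
    have "norm (hahn_series q \<omega> f x n) = q^(2*n+1) * norm (f (?c + q^(2*n+1)*(x - ?c)))"
      using assms(1,2) by (simp add: series_eq abs_mult)
    also have "\<dots> \<le> q^(2*n+1) * B" using B assms(1) by (intro mult_left_mono) auto
    finally show "norm (hahn_series q \<omega> f x n) \<le> B * q^(2*n+1)" by (simp add: mult.commute)
  qed
qed

lemma approx:
  fixes q x d e :: real
  assumes "0 < q" "q < 1" "is_interval I" "homega0 q \<omega> \<in> I" "x \<in> I"
    and cont: "continuous (at (homega0 q \<omega>) within I) f"
    and D: "\<forall>y\<in>I. \<bar>y - homega0 q \<omega>\<bar> < d \<longrightarrow> \<bar>f y - f (homega0 q \<omega>)\<bar> \<le> e"
    and xd: "\<bar>x - homega0 q \<omega>\<bar> < d"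
  shows "\<bar>suminf (hahn_series q \<omega> f x) - f (homega0 q \<omega>) * (q / (1 - q^2))\<bar> \<le> e * (q / (1 - q^2))"
proof -
  let ?c = "homega0 q \<omega>"
  let ?K = "q / (1 - q^2)"
  let ?b = "\<lambda>n. hahn_series q \<omega> f x n - f ?c * q^(2*n+1)"
  have bs: "?b sums (suminf (hahn_series q \<omega> f x) - f ?c * ?K)"
    using summ[OF assms(1-6)] geo_sums[OF assms(1,2)]
    by (intro sums_diff sums_mult) (auto simp: summable_sums)
  have es: "(\<lambda>n. e * q^(2*n+1)) sums (e * ?K)"
    using geo_sums[OF assms(1,2)] by (rule sums_mult)
  have mes: "(\<lambda>n. - (e * q^(2*n+1))) sums (- (e * ?K))"
    using es by (rule sums_minus)
  have bnd: "\<bar>?b n\<bar> \<le> e * q^(2*n+1)" for n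
  proof -
    let ?s = "?c + q^(2*n+1)*(x - ?c)"
    have qn: "0 < q^(2*n+1)" "q^(2*n+1) \<le> 1" using assms(1,2)
      by (simp, intro power_le_one) auto
    have sI: "?s \<in> I" using assms qn by (intro mem_I) auto
    have "\<bar>?s - ?c\<bar> = q^(2*n+1) * \<bar>x - ?c\<bar>"
      by (metis abs_mult abs_of_pos qn(1) add_diff_cancel_left')
    also have "\<dots> \<le> \<bar>x - ?c\<bar>" using qn by (intro mult_left_le_one_le) auto
    finally have "\<bar>?s - ?c\<bar> < d" using xd by linarith
    then have fe: "\<bar>f ?s - f ?c\<bar> \<le> e" using D sI by blast
    have "?b n = q^(2*n+1) * (f ?s - f ?c)"
      using assms(1,2) by (simp add: series_eq algebra_simps)
    then have "\<bar>?b n\<bar> = q^(2*n+1) * \<bar>f ?s - f ?c\<bar>" by (metis abs_mult abs_of_pos qn(1))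
    also have "\<dots> \<le> q^(2*n+1) * e" using fe qn by (intro mult_left_mono) auto
    finally show ?thesis by (simp add: mult.commute)
  qed
  have "suminf (hahn_series q \<omega> f x) - f ?c * ?K \<le> e * ?K"
    by (rule sums_le[OF _ bs es]) (use bnd in \<open>simp add: abs_le_iff\<close>)
  moreover have "- (e * ?K) \<le> suminf (hahn_series q \<omega> f x) - f ?c * ?K"
    by (rule sums_le[OF _ mes bs]) (use bnd in \<open>simp add: abs_le_iff, smt\<close>)
  ultimately show ?thesis by (simp add: abs_le_iff)
qed


lemma cancel_lem: "(Q::real) \<noteq> 0 \<Longrightarrow> Q * (N / (- (L * (Q * A)))) = N / (- (L * A))"
  by (cases "L * A = 0") (auto simp: field_simps)

lemma cancel2: "(X::real) \<noteq> 0 \<Longrightarrow> X * (N / (- X)) = - N"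
  by simp

context
  fixes q \<omega> :: real and I :: "real set" and f :: "real \<Rightarrow> real"
  assumes q: "0 < q" "q < 1"
    and I: "is_interval I" "homega0 q \<omega> \<in> I"
    and cont: "continuous (at (homega0 q \<omega>) within I) f"
begin

lemma qq: "q * q < 1"
proof -
  have "q * q < 1 * 1" by (rule mult_strict_mono) (use q in auto)
  then show ?thesis by simp
qed

lemma q2: "q^2 < 1" using qq by (simp add: power2_eq_square)

lemma K_pos: "0 < q / (1 - q^2)"
  using q by (simp add: power_less_one_iff abs_square_less_1)

lemma LK: "(1/q - q) * (q / (1 - q^2)) = 1"
proof -
  have "1 - q^2 \<noteq> 0" using q2 by simp
  then show ?thesis using q by (simp add: field_simps power2_eq_square)
qed

lemma L_pos: "0 < 1/q - q"
proof -
  have "q * q < 1" by (rule qq)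
  then have "q < 1/q" using q by (simp add: field_simps)
  then show ?thesis by simp
qed

lemma F_eq: "hahn_int0 q \<omega> f x = (1/q - q) * (x - homega0 q \<omega>) * suminf (hahn_series q \<omega> f x)"
  using q by (simp add: hahn_int0_def diff_eq)

lemma near:
  assumes "e > 0"
  obtains d where "d > 0" "\<And>x. x \<in> I \<Longrightarrow> \<bar>x - homega0 q \<omega>\<bar> < d \<Longrightarrow>
     \<bar>suminf (hahn_series q \<omega> f x) - f (homega0 q \<omega>) * (q / (1 - q^2))\<bar> \<le> e * (q / (1 - q^2))"
proof -
  obtain d where d: "d > 0" "\<forall>x'\<in>I. dist x' (homega0 q \<omega>) < d \<longrightarrow> dist (f x') (f (homega0 q \<omega>)) < e"
    using cont assms unfolding continuous_within_eps_delta by blast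
  have D: "\<forall>y\<in>I. \<bar>y - homega0 q \<omega>\<bar> < d \<longrightarrow> \<bar>f y - f (homega0 q \<omega>)\<bar> \<le> e"
    using d(2) by (auto simp: dist_real_def intro: less_imp_le)
  show ?thesis
    by (rule that[OF d(1)], rule approx[OF q I _ cont D]) auto
qed

lemma cont_F: "continuous (at (homega0 q \<omega>) within I) (hahn_int0 q \<omega> f)"
  unfolding continuous_within_eps_delta
proof (intro allI impI)
  fix \<epsilon> :: real assume \<epsilon>: "\<epsilon> > 0"
  let ?c = "homega0 q \<omega>" let ?K = "q / (1 - q^2)" let ?L = "1/q - q"
  obtain d1 where d1: "d1 > 0" "\<And>x. x \<in> I \<Longrightarrow> \<bar>x - ?c\<bar> < d1 \<Longrightarrow>
     \<bar>suminf (hahn_series q \<omega> f x) - f ?c * ?K\<bar> \<le> 1 * ?K"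
    using near[of 1] by auto
  define M where "M = (\<bar>f ?c\<bar> + 1) * ?K"
  have M: "M \<ge> 0" unfolding M_def using K_pos by (intro mult_nonneg_nonneg) auto
  have LM: "?L * M \<ge> 0" using M L_pos by simp
  define \<delta> where "\<delta> = min d1 (\<epsilon> / (?L * M + 1))"
  have "\<delta> > 0" using d1 \<epsilon> LM by (simp add: \<delta>_def)
  moreover have "dist (hahn_int0 q \<omega> f x) (hahn_int0 q \<omega> f ?c) < \<epsilon>" if x: "x \<in> I" "dist x ?c < \<delta>" for x
  proof -
    have xd: "\<bar>x - ?c\<bar> < d1" "\<bar>x - ?c\<bar> < \<epsilon> / (?L * M + 1)"
      using x by (auto simp: \<delta>_def dist_real_def)
    have "\<bar>suminf (hahn_series q \<omega> f x)\<bar> \<le> M"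
    proof -
      have t: "\<bar>suminf (hahn_series q \<omega> f x)\<bar> \<le> \<bar>suminf (hahn_series q \<omega> f x) - f ?c * ?K\<bar> + \<bar>f ?c * ?K\<bar>"
        by (metis abs_triangle_ineq diff_add_cancel)
      have "\<bar>f ?c * ?K\<bar> = \<bar>f ?c\<bar> * ?K" using K_pos by (simp only: abs_mult abs_of_pos)
      moreover have "M = \<bar>f ?c\<bar> * ?K + ?K" unfolding M_def by (simp only: distrib_right mult_1_left)
      moreover have "\<bar>suminf (hahn_series q \<omega> f x) - f ?c * ?K\<bar> \<le> ?K" using d1(2)[OF x(1) xd(1)] by simp
      ultimately show ?thesis using t by linarith
    qed
    have Fc: "hahn_int0 q \<omega> f ?c = 0" by (simp add: F_eq)
    have "\<bar>hahn_int0 q \<omega> f x\<bar> = ?L * \<bar>x - ?c\<bar> * \<bar>suminf (hahn_series q \<omega> f x)\<bar>"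
      using L_pos by (simp add: F_eq abs_mult)
    also have "\<dots> \<le> ?L * \<bar>x - ?c\<bar> * M"
      using \<open>\<bar>suminf (hahn_series q \<omega> f x)\<bar> \<le> M\<close> L_pos by (intro mult_left_mono) auto
    also have "\<dots> \<le> (?L * M + 1) * \<bar>x - ?c\<bar>" using LM by (simp add: algebra_simps)
    also have "\<dots> < (?L * M + 1) * (\<epsilon> / (?L * M + 1))"
      using xd(2) LM by (intro mult_strict_left_mono) auto
    also have "\<dots> = \<epsilon>" using LM by simp
    finally show ?thesis using Fc by (simp add: dist_real_def)
  qed
  ultimately show "\<exists>\<delta>>0. \<forall>x'\<in>I. dist x' ?c < \<delta> \<longrightarrow> dist (hahn_int0 q \<omega> f x') (hahn_int0 q \<omega> f ?c) < \<epsilon>"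
    by blast
qed

lemma deriv_c: "(hahn_int0 q \<omega> f has_real_derivative f (homega0 q \<omega>)) (at (homega0 q \<omega>) within I)"
  unfolding has_field_derivative_iff Lim_within
proof (intro allI impI)
  fix \<epsilon> :: real assume \<epsilon>: "\<epsilon> > 0"
  let ?c = "homega0 q \<omega>" let ?K = "q / (1 - q^2)" let ?L = "1/q - q"
  obtain d where d: "d > 0" "\<And>x. x \<in> I \<Longrightarrow> \<bar>x - ?c\<bar> < d \<Longrightarrow>
     \<bar>suminf (hahn_series q \<omega> f x) - f ?c * ?K\<bar> \<le> (\<epsilon>/2) * ?K"
    using near[of "\<epsilon>/2"] \<epsilon> by auto
  have "dist ((hahn_int0 q \<omega> f x - hahn_int0 q \<omega> f ?c) / (x - ?c)) (f ?c) < \<epsilon>"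
    if x: "x \<in> I" "0 < dist x ?c" "dist x ?c < d" for x
  proof -
    have ne: "x - ?c \<noteq> 0" using x by auto
    have a: "(hahn_int0 q \<omega> f x - hahn_int0 q \<omega> f ?c) / (x - ?c) = ?L * suminf (hahn_series q \<omega> f x)"
      using ne by (simp add: F_eq)
    have "?L * (suminf (hahn_series q \<omega> f x) - f ?c * ?K) = ?L * suminf (hahn_series q \<omega> f x) - f ?c * (?L * ?K)"
      by (simp add: algebra_simps)
    also have "\<dots> = ?L * suminf (hahn_series q \<omega> f x) - f ?c" by (simp only: LK mult_1_right)
    finally have e: "?L * (suminf (hahn_series q \<omega> f x) - f ?c * ?K) = ?L * suminf (hahn_series q \<omega> f x) - f ?c" .
    have eq: "(hahn_int0 q \<omega> f x - hahn_int0 q \<omega> f ?c) / (x - ?c) - f ?c = ?L * (suminf (hahn_series q \<omega> f x) - f ?c * ?K)"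
      using a e by linarith
    have "\<bar>?L * (suminf (hahn_series q \<omega> f x) - f ?c * ?K)\<bar> \<le> ?L * ((\<epsilon>/2) * ?K)"
    proof -
      have "\<bar>suminf (hahn_series q \<omega> f x) - f ?c * ?K\<bar> \<le> (\<epsilon>/2) * ?K"
        using d(2)[OF x(1)] x(3) by (simp add: dist_real_def)
      then show ?thesis using L_pos by (simp only: abs_mult abs_of_pos mult_left_mono)
    qed
    also have "\<dots> = (\<epsilon>/2) * (?L * ?K)" by (simp only: mult_ac)
    also have "\<dots> = \<epsilon>/2" by (simp only: LK mult_1_right)
    finally show ?thesis using eq \<epsilon> by (simp add: dist_real_def)
  qed
  then show "\<exists>\<delta>>0. \<forall>x\<in>I. 0 < dist x ?c \<and> dist x ?c < \<delta> \<longrightarrow>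
      dist ((hahn_int0 q \<omega> f x - hahn_int0 q \<omega> f ?c) / (x - ?c)) (f ?c) < \<epsilon>"
    using d(1) by blast
qed

lemma deriv_other:
  assumes t: "t \<in> I" and x: "x = q * t + \<omega>" and xc: "x \<noteq> homega0 q \<omega>"
  shows "f x = (hahn_int0 q \<omega> f (hsigma q \<omega> x) - hahn_int0 q \<omega> f (hsigma_inv q \<omega> x)) /
               (hsigma q \<omega> x - hsigma_inv q \<omega> x)"
proof -
  let ?c = "homega0 q \<omega>" let ?L = "1/q - q"
  define y where "y = hsigma q \<omega> x"
  have q0: "q \<noteq> 0" "q \<noteq> 1" using q by auto
  have inv: "hsigma_inv q \<omega> x = t" using x q0 by (simp add: hsigma_inv_def)
  have xe: "x = ?c + q * (t - ?c)" using x sig_eq[OF q0(2), of \<omega> t] by (simp add: hsigma_def)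
  have ye: "y = ?c + q^2 * (t - ?c)" unfolding y_def using sig_eq[OF q0(2), of \<omega> x] xe
    by (simp add: power2_eq_square)
  have tc: "t \<noteq> ?c" using xe xc by auto
  have yI: "y \<in> I" unfolding ye using I t q2 by (intro mem_I) auto
  have st: "summable (hahn_series q \<omega> f t)" by (rule summ[OF q I t cont])
  have sy: "summable (hahn_series q \<omega> f y)" by (rule summ[OF q I yI cont])
  have rel: "hahn_series q \<omega> f y n * q^2 = hahn_series q \<omega> f t (Suc n)" for n
  proof -
    have e1: "q^(2*n+1) * (y - ?c) = q^(2*Suc n+1) * (t - ?c)"
      by (simp add: ye power_add mult_ac power2_eq_square)
    have e2: "q^(2*n+1) * q^2 = q^(2*Suc n+1)" by (simp add: power_add mult_ac power2_eq_square)
    show ?thesis unfolding series_eq[OF q0(2)] e1 using e2 by (simp add: mult_ac power2_eq_square)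
  qed
  have "suminf (hahn_series q \<omega> f y) * q^2 = (\<Sum>n. hahn_series q \<omega> f y n * q^2)"
    using sy by (rule suminf_mult2)
  also have "\<dots> = (\<Sum>n. hahn_series q \<omega> f t (Suc n))" using rel by simp
  also have "\<dots> = suminf (hahn_series q \<omega> f t) - hahn_series q \<omega> f t 0"
    using st by (rule suminf_split_head)
  also have "hahn_series q \<omega> f t 0 = q * f x" using q0 xe by (simp add: series_eq)
  finally have Sy: "suminf (hahn_series q \<omega> f y) * q^2 = suminf (hahn_series q \<omega> f t) - q * f x" .
  have Fy: "hahn_int0 q \<omega> f y = ?L * (t - ?c) * (suminf (hahn_series q \<omega> f y) * q^2)"
    by (simp add: F_eq ye mult_ac)
  have Ft: "hahn_int0 q \<omega> f t = ?L * (t - ?c) * suminf (hahn_series q \<omega> f t)"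
    by (simp add: F_eq)
  have num: "hahn_int0 q \<omega> f y - hahn_int0 q \<omega> f t = - (?L * q * (t - ?c)) * f x"
    unfolding Fy Ft Sy by (simp add: algebra_simps)
  have Lq: "?L * q = 1 - q^2" using q0 by (simp add: field_simps power2_eq_square)
  have den: "y - t = - (?L * q * (t - ?c))" unfolding Lq ye by (simp add: algebra_simps)
  have nz: "?L * q * (t - ?c) \<noteq> 0" using L_pos q tc by simp
  show ?thesis unfolding inv y_def[symmetric] num den using nz by simp
qed

lemma int0_D:
  assumes a: "a \<in> I"
  shows "summable (hahn_series q \<omega> (hahn_sderiv q \<omega> f) a)
     \<and> hahn_int0 q \<omega> (hahn_sderiv q \<omega> f) a = f a - f (homega0 q \<omega>)"
proof (cases "a = homega0 q \<omega>")
  case True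
  have q0: "q \<noteq> 0" "q \<noteq> 1" using q by auto
  have "hahn_series q \<omega> (hahn_sderiv q \<omega> f) a = (\<lambda>n. q^(2*n+1) * hahn_sderiv q \<omega> f a)"
    by (rule ext) (simp add: series_eq[OF q0(2)] True)
  moreover have "summable (\<lambda>n. q^(2*n+1) * hahn_sderiv q \<omega> f a)"
    using geo_sums[OF q] by (intro summable_mult2) (auto simp: sums_iff)
  ultimately show ?thesis using True q0 by (simp add: hahn_int0_def diff_eq)
next
  case False
  let ?c = "homega0 q \<omega>" let ?L = "1/q - q"
  let ?D = "hahn_sderiv q \<omega> f"
  have q0: "q \<noteq> 0" "q \<noteq> 1" using q by auto
  define h where "h n = f (?c + q^(2*n) * (a - ?c))" for n
  have hh: "h = (\<lambda>n. f (?c + q^(2*n) * (a - ?c)))" by (simp add: h_def fun_eq_iff)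
  have hl: "h \<longlonglongrightarrow> f ?c" using f_lim[OF q I a cont, of 0] unfolding hh by simp
  have ac: "a - ?c \<noteq> 0" using False by simp
  have Lnz: "?L \<noteq> 0" using L_pos by simp
  have trm: "hahn_series q \<omega> ?D a n = (h (Suc n) - h n) / (- (?L * (a - ?c)))" for n
  proof -
    define y where "y = ?c + q^(2*n+1) * (a - ?c)"
    have qp: "q^(2*n+1) \<noteq> 0" using q by simp
    have yc: "y \<noteq> ?c" using qp ac by (simp add: y_def)
    have s1: "hsigma q \<omega> y = ?c + q^(2*Suc n) * (a - ?c)"
      using sig_eq[OF q0(2)] by (simp add: y_def power_add mult_ac)
    have s2: "hsigma_inv q \<omega> y = ?c + q^(2*n) * (a - ?c)"
      using siginv_eq[OF q0(2,1)] q0 by (simp add: y_def power_add mult_ac)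
    have dd: "hsigma q \<omega> y - hsigma_inv q \<omega> y = - (?L * (q^(2*n+1) * (a - ?c)))"
      using diff_eq[OF q0(2,1), of \<omega> y] by (simp add: y_def)
    have Dy: "?D y = (h (Suc n) - h n) / (- (?L * (q^(2*n+1) * (a - ?c))))"
      unfolding hahn_sderiv_def using yc s1 s2 dd by (simp add: h_def)
    have "hahn_series q \<omega> ?D a n = q^(2*n+1) * ?D y"
      by (simp add: series_eq[OF q0(2)] y_def)
    also have "\<dots> = (h (Suc n) - h n) / (- (?L * (a - ?c)))"
      unfolding Dy using qp by (rule cancel_lem)
    finally show ?thesis .
  qed
  have "(\<lambda>n. (h (Suc n) - h n) / (- (?L * (a - ?c)))) sums ((f ?c - h 0) / (- (?L * (a - ?c))))"
    using telescope_sums[OF hl] by (rule sums_divide)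
  then have S: "hahn_series q \<omega> ?D a sums ((f ?c - f a) / (- (?L * (a - ?c))))"
  proof -
    have "hahn_series q \<omega> ?D a = (\<lambda>n. (h (Suc n) - h n) / (- (?L * (a - ?c))))"
      by (rule ext) (rule trm)
    moreover have "h 0 = f a" by (simp add: h_def)
    ultimately show ?thesis using \<open>(\<lambda>n. (h (Suc n) - h n) / (- (?L * (a - ?c)))) sums ((f ?c - h 0) / (- (?L * (a - ?c))))\<close> by simp
  qed
  have "hahn_int0 q \<omega> ?D a = ?L * (a - ?c) * ((f ?c - f a) / (- (?L * (a - ?c))))"
    using S q0 by (simp add: hahn_int0_def diff_eq sums_iff)
  also have "\<dots> = - (f ?c - f a)" using ac Lnz by (intro cancel2) simp
  also have "\<dots> = f a - f ?c" by simp
  finally show ?thesis using S by (simp add: sums_iff)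
qed

end

theorem theorem2p13:
  fixes q \<omega> :: real and I :: "real set" and f :: "real \<Rightarrow> real"
  assumes q: "0 < q" "q < 1"
    and \<omega>: "\<omega> \<ge> 0"
    and I: "is_interval I" "homega0 q \<omega> \<in> I"
    and cont: "continuous (at (homega0 q \<omega>) within I) f"
  shows "(\<forall>x\<in>I. summable (hahn_series q \<omega> f x))
     \<and> continuous (at (homega0 q \<omega>) within I) (hahn_int0 q \<omega> f)
     \<and> (\<forall>x\<in>hahn_image q \<omega> I. hahn_sderiv_at q \<omega> I (hahn_int0 q \<omega> f) x (f x))
     \<and> (\<forall>a\<in>I. \<forall>b\<in>I. summable (hahn_series q \<omega> (hahn_sderiv q \<omega> f) a)
           \<and> summable (hahn_series q \<omega> (hahn_sderiv q \<omega> f) b)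
           \<and> hahn_int q \<omega> (hahn_sderiv q \<omega> f) a b = f b - f a)"
  proof -
  have A: "\<forall>x\<in>I. summable (hahn_series q \<omega> f x)"
    using summ[OF q I _ cont] by blast
  have B: "\<forall>x\<in>hahn_image q \<omega> I. hahn_sderiv_at q \<omega> I (hahn_int0 q \<omega> f) x (f x)"
  proof
    fix x assume "x \<in> hahn_image q \<omega> I"
    then obtain t where t: "t \<in> I" "x = q * t + \<omega>" by (auto simp: hahn_image_def)
    show "hahn_sderiv_at q \<omega> I (hahn_int0 q \<omega> f) x (f x)"
    proof (cases "x = homega0 q \<omega>")
      case True
      then show ?thesis using deriv_c[OF q I cont] by (simp add: hahn_sderiv_at_def)
    next
      case False
      then show ?thesis using deriv_other[OF q I cont t False] by (simp add: hahn_sderiv_at_def)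
    qed
  qed
  have C: "\<forall>a\<in>I. \<forall>b\<in>I. summable (hahn_series q \<omega> (hahn_sderiv q \<omega> f) a)
           \<and> summable (hahn_series q \<omega> (hahn_sderiv q \<omega> f) b)
           \<and> hahn_int q \<omega> (hahn_sderiv q \<omega> f) a b = f b - f a"
    using int0_D[OF q I cont] by (simp add: hahn_int_def)
  show ?thesis using A B C cont_F[OF q I cont] by blast
qed

end
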